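(* Let $G$ be a digraph on $n$ vertices with $\delta^0(G)\geq n/2$. Let $d\geq0$ and suppose $A,B,S,T$ is a partition of $V(G)$ into sets of sizes $a,b,s,t$ with $t\geq s\geq d+2$ and $b=a+d$. Then $G$ contains a set $M$ of $d+1$ edges in $E(T,S\cup B)\cup E(B,S)$ such that the endvertices of edges of $M$ lying outside $B$ are all distinct (no vertex outside $B$ is an endvertex of two edges of $M$), and each vertex of $B$ is an endvertex of at most one edge of $M\cap E(T,B)$ and at most one edge of $M\cap E(B,S)$. Moreover, if $E(T,S)\neq\emptyset$, then $M$ contains an edge of $E(T,S)$.
   Context: Digraphs have no loops and at most one edge in each direction between two vertices; $\delta^0$ is the minimum semidegree (minimum of all in- and outdegrees). $E(X,Y)$ denotes the set of edges $xy$ of $G$ with $x\in X$ and $y\in Y$. *)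

theory Defs
  imports Main
begin

text \<open>A digraph is a finite vertex set V with an edge set E of ordered pairs,
  without loops; at most one edge in each direction is automatic for a set of pairs.\<close>
definition digraph :: "'a set \<Rightarrow> ('a \<times> 'a) set \<Rightarrow> bool" where
  "digraph V E \<longleftrightarrow> finite V \<and> E \<subseteq> V \<times> V \<and> (\<forall>v. (v, v) \<notin> E)"

definition outdeg :: "('a \<times> 'a) set \<Rightarrow> 'a \<Rightarrow> nat" where
  "outdeg E v = card {w. (v, w) \<in> E}"

definition indeg :: "('a \<times> 'a) set \<Rightarrow> 'a \<Rightarrow> nat" where
  "indeg E v = card {u. (u, v) \<in> E}"

text \<open>Minimum semidegree of the digraph (V,E), for V nonempty.\<close>
definition min_semideg :: "'a set \<Rightarrow> ('a \<times> 'a) set \<Rightarrow> nat" where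
  "min_semideg V E = Min ((outdeg E ` V) \<union> (indeg E ` V))"

definition edges_between :: "('a \<times> 'a) set \<Rightarrow> 'a set \<Rightarrow> 'a set \<Rightarrow> ('a \<times> 'a) set" where
  "edges_between E X Y = {e \<in> E. fst e \<in> X \<and> snd e \<in> Y}"

definition endvertex :: "'a \<Rightarrow> 'a \<times> 'a \<Rightarrow> bool" where
  "endvertex v e \<longleftrightarrow> v = fst e \<or> v = snd e"

end

theory Submission
  imports Defs
begin

lemma augment:
  fixes V :: "'a set" and E :: "('a \<times> 'a) set" and A B S T :: "'a set" and d :: nat
  assumes dg: "digraph V E"
    and ms: "2 * min_semideg V E \<ge> card V"
    and U: "A \<union> B \<union> S \<union> T = V"
    and "A \<inter> B = {}" and "A \<inter> S = {}" and "A \<inter> T = {}"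
    and "B \<inter> S = {}" and "B \<inter> T = {}" and "S \<inter> T = {}"
    and cTS: "card T \<ge> card S" and cS: "card S \<ge> d + 2"
    and cB: "card B = card A + d"
    and MX: "M \<subseteq> edges_between E T (S \<union> B) \<union> edges_between E B S"
    and if1: "inj_on fst M" and is1: "inj_on snd M" and cM: "card M \<le> d"
    and inv: "edges_between E T S \<noteq> {} \<longrightarrow> M \<inter> edges_between E T S \<noteq> {}"
  shows "\<exists>M'. M' \<subseteq> edges_between E T (S \<union> B) \<union> edges_between E B S
      \<and> inj_on fst M' \<and> inj_on snd M' \<and> card M' = Suc (card M)
      \<and> (edges_between E T S \<noteq> {} \<longrightarrow> M' \<inter> edges_between E T S \<noteq> {})"
proof (rule ccontr)
  assume no: "\<not> ?thesis"
  have fV: "finite V" and EV: "E \<subseteq> V \<times> V" and lp: "\<And>v. (v,v) \<notin> E"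
    using dg unfolding digraph_def by auto
  have fE: "finite E" using fV EV finite_subset by blast
  have ME: "M \<subseteq> E" using MX unfolding edges_between_def by auto
  have fM: "finite M" using finite_subset[OF ME fE] .
  have fA: "finite A" using U fV by (auto intro: rev_finite_subset[OF fV])
  have fB: "finite B" using U fV by (auto intro: rev_finite_subset[OF fV])
  have fS: "finite S" using U fV by (auto intro: rev_finite_subset[OF fV])
  have fT: "finite T" using U fV by (auto intro: rev_finite_subset[OF fV])
  have cfM: "card (fst ` M) \<le> d" using cM card_image_le[OF fM] le_trans by blast
  have csM: "card (snd ` M) \<le> d" using cM card_image_le[OF fM] le_trans by blast
  obtain x where x: "x \<in> T" "x \<notin> fst ` M"
  proof -
    have "\<not> T \<subseteq> fst ` M"
    proof
      assume "T \<subseteq> fst ` M"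
      hence "card T \<le> card (fst ` M)" using card_mono fM by blast
      thus False using cfM cTS cS by linarith
    qed
    thus ?thesis using that by blast
  qed
  obtain y where y: "y \<in> S" "y \<notin> snd ` M"
  proof -
    have "\<not> S \<subseteq> snd ` M"
    proof
      assume "S \<subseteq> snd ` M"
      hence "card S \<le> card (snd ` M)" using card_mono fM by blast
      thus False using csM cS by linarith
    qed
    thus ?thesis using that by blast
  qed
  have c1: "(x,w) \<notin> E" if w: "w \<in> S \<union> B" "w \<notin> snd ` M" for w
  proof
    assume xw: "(x,w) \<in> E"
    let ?M' = "insert (x,w) M"
    have "(x,w) \<notin> M" using x by force
    hence "card ?M' = Suc (card M)" using fM by simp
    moreover have "?M' \<subseteq> edges_between E T (S \<union> B) \<union> edges_between E B S"
      using MX xw x w unfolding edges_between_def by auto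
    moreover have "inj_on fst ?M'" using if1 x by (auto simp: inj_on_def)
    moreover have "inj_on snd ?M'" using is1 w by (auto simp: inj_on_def)
    moreover have "edges_between E T S \<noteq> {} \<longrightarrow> ?M' \<inter> edges_between E T S \<noteq> {}"
      using inv by blast
    ultimately show False using no by blast
  qed
  have c2: "(w,y) \<notin> E" if w: "w \<in> T \<union> B" "w \<notin> fst ` M" for w
  proof
    assume xw: "(w,y) \<in> E"
    let ?M' = "insert (w,y) M"
    have "(w,y) \<notin> M" using y by force
    hence "card ?M' = Suc (card M)" using fM by simp
    moreover have "?M' \<subseteq> edges_between E T (S \<union> B) \<union> edges_between E B S"
      using MX xw y w unfolding edges_between_def by auto
    moreover have "inj_on fst ?M'" using if1 w by (auto simp: inj_on_def)
    moreover have "inj_on snd ?M'" using is1 y by (auto simp: inj_on_def)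
    moreover have "edges_between E T S \<noteq> {} \<longrightarrow> ?M' \<inter> edges_between E T S \<noteq> {}"
      using inv by blast
    ultimately show False using no by blast
  qed
  have c3: "\<not> ((x, snd e) \<in> E \<and> (fst e, y) \<in> E)" if e: "e \<in> M" for e
  proof
    assume h: "(x, snd e) \<in> E \<and> (fst e, y) \<in> E"
    let ?M' = "insert (x, snd e) (insert (fst e, y) (M - {e}))"
    have xe: "x \<noteq> fst e" using x e by blast
    have n1: "(fst e, y) \<notin> M - {e}" using y by force
    have n2: "(x, snd e) \<notin> insert (fst e, y) (M - {e})" using x xe by force
    have "card (M - {e}) = card M - 1" using e fM by simp
    moreover have "card M \<ge> 1" using e fM card_0_eq[OF fM] by (cases "card M") auto
    ultimately have "card ?M' = Suc (card M)" using n1 n2 fM by simp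
    moreover have eX: "e \<in> edges_between E T (S \<union> B) \<union> edges_between E B S" using e MX by blast
    have "?M' \<subseteq> edges_between E T (S \<union> B) \<union> edges_between E B S"
      using MX h x y eX unfolding edges_between_def by auto
    moreover have "inj_on fst ?M'" using if1 x e xe
      unfolding inj_on_def by (auto simp: image_iff)
    moreover have "inj_on snd ?M'" using is1 y e
      unfolding inj_on_def by (auto simp: image_iff)
    moreover have "edges_between E T S \<noteq> {} \<longrightarrow> ?M' \<inter> edges_between E T S \<noteq> {}"
    proof
      assume "edges_between E T S \<noteq> {}"
      then obtain e' where e': "e' \<in> M" "e' \<in> edges_between E T S" using inv by blast
      show "?M' \<inter> edges_between E T S \<noteq> {}"
      proof (cases "e' = e")
        case True
        hence "(x, snd e) \<in> edges_between E T S" using e' x h unfolding edges_between_def by auto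
        thus ?thesis by blast
      next
        case False thus ?thesis using e' by blast
      qed
    qed
    ultimately show False using no by blast
  qed
  define P where "P = {e \<in> M. (x, snd e) \<in> E}"
  define Q where "Q = {e \<in> M. (fst e, y) \<in> E}"
  have PQ: "P \<inter> Q = {}" using c3 unfolding P_def Q_def by blast
  have fP: "finite P" and fQ: "finite Q" using fM unfolding P_def Q_def by auto
  have "card P + card Q = card (P \<union> Q)" using PQ fP fQ card_Un_disjoint by metis
  also have "\<dots> \<le> card M" using fM by (intro card_mono) (auto simp: P_def Q_def)
  finally have pq: "card P + card Q \<le> d" using cM by linarith
  have Nout: "{w. (x,w) \<in> E} \<subseteq> A \<union> (T - {x}) \<union> snd ` P"
  proof
    fix w assume "w \<in> {w. (x,w) \<in> E}"
    hence xw: "(x,w) \<in> E" by simp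
    hence "w \<in> V" "w \<noteq> x" using EV lp by auto
    show "w \<in> A \<union> (T - {x}) \<union> snd ` P"
    proof (cases "w \<in> S \<union> B")
      case True
      then obtain e where "e \<in> M" "w = snd e" using c1 xw by blast
      thus ?thesis using xw unfolding P_def by auto
    next
      case False thus ?thesis using \<open>w \<in> V\<close> \<open>w \<noteq> x\<close> U by auto
    qed
  qed
  have Nin: "{w. (w,y) \<in> E} \<subseteq> A \<union> (S - {y}) \<union> fst ` Q"
  proof
    fix w assume "w \<in> {w. (w,y) \<in> E}"
    hence xw: "(w,y) \<in> E" by simp
    hence "w \<in> V" "w \<noteq> y" using EV lp by auto
    show "w \<in> A \<union> (S - {y}) \<union> fst ` Q"
    proof (cases "w \<in> T \<union> B")
      case True
      then obtain e where "e \<in> M" "w = fst e" using c2 xw by blast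
      thus ?thesis using xw unfolding Q_def by auto
    next
      case False thus ?thesis using \<open>w \<in> V\<close> \<open>w \<noteq> y\<close> U by auto
    qed
  qed
  have "outdeg E x \<le> card (A \<union> (T - {x}) \<union> snd ` P)"
    unfolding outdeg_def using Nout fA fT fP by (intro card_mono) auto
  also have "\<dots> \<le> card A + card (T - {x}) + card (snd ` P)"
    by (meson card_Un_le add_le_mono order_trans le_refl)
  also have "\<dots> \<le> card A + (card T - 1) + card P"
    using card_image_le[OF fP] x fT by simp
  finally have od: "outdeg E x \<le> card A + (card T - 1) + card P" .
  have "indeg E y \<le> card (A \<union> (S - {y}) \<union> fst ` Q)"
    unfolding indeg_def using Nin fA fS fQ by (intro card_mono) auto
  also have "\<dots> \<le> card A + card (S - {y}) + card (fst ` Q)"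
    by (meson card_Un_le add_le_mono order_trans le_refl)
  also have "\<dots> \<le> card A + (card S - 1) + card Q"
    using card_image_le[OF fQ] y fS by simp
  finally have idg: "indeg E y \<le> card A + (card S - 1) + card Q" .
  have xV: "x \<in> V" and yV: "y \<in> V" using x y U by auto
  have fin: "finite (outdeg E ` V \<union> indeg E ` V)" using fV by simp
  have m1: "min_semideg V E \<le> outdeg E x" unfolding min_semideg_def
    using Min_le[OF fin] xV by blast
  have m2: "min_semideg V E \<le> indeg E y" unfolding min_semideg_def
    using Min_le[OF fin] yV by blast
  have "card (A \<union> B) = card A + card B" using fA fB assms(4) card_Un_disjoint by blast
  moreover have "card (A \<union> B \<union> S) = card (A \<union> B) + card S"
    using fA fB fS assms(5,7) by (intro card_Un_disjoint) auto
  moreover have "card (A \<union> B \<union> S \<union> T) = card (A \<union> B \<union> S) + card T"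
    using fA fB fS fT assms(6,8,9) by (intro card_Un_disjoint) auto
  ultimately have "card V = card A + card B + card S + card T" using U by simp
  have "card T \<ge> 1" "card S \<ge> 1" using cS cTS by linarith+
  show False using m1 m2 od idg pq ms cB \<open>card V = _\<close> \<open>card T \<ge> 1\<close> \<open>card S \<ge> 1\<close> by linarith
qed

theorem proposition5p6:
  fixes V :: "'a set" and E :: "('a \<times> 'a) set" and A B S T :: "'a set" and d :: nat
  assumes "digraph V E"
    and "V \<noteq> {}"
    and "2 * min_semideg V E \<ge> card V"
    and "A \<union> B \<union> S \<union> T = V"
    and "A \<inter> B = {}" and "A \<inter> S = {}" and "A \<inter> T = {}"
    and "B \<inter> S = {}" and "B \<inter> T = {}" and "S \<inter> T = {}"
    and "card T \<ge> card S" and "card S \<ge> d + 2"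
    and "card B = card A + d"
  shows "\<exists>M. M \<subseteq> edges_between E T (S \<union> B) \<union> edges_between E B S
            \<and> card M = d + 1
            \<and> (\<forall>v. v \<notin> B \<longrightarrow> card {e \<in> M. endvertex v e} \<le> 1)
            \<and> (\<forall>v \<in> B. card {e \<in> M \<inter> edges_between E T B. endvertex v e} \<le> 1
                       \<and> card {e \<in> M \<inter> edges_between E B S. endvertex v e} \<le> 1)
            \<and> (edges_between E T S \<noteq> {} \<longrightarrow> M \<inter> edges_between E T S \<noteq> {})"
proof -
  define X where "X = edges_between E T (S \<union> B) \<union> edges_between E B S"
  define ok where "ok M \<longleftrightarrow> M \<subseteq> X \<and> inj_on fst M \<and> inj_on snd M
      \<and> (edges_between E T S \<noteq> {} \<longrightarrow> M \<inter> edges_between E T S \<noteq> {})" for M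
  have fV: "finite V" and EV: "E \<subseteq> V \<times> V"
    using assms(1) unfolding digraph_def by auto
  have fE: "finite E" using fV EV finite_subset by blast
  have XE: "X \<subseteq> E" unfolding X_def edges_between_def by auto
  have aug: "\<exists>M'. ok M' \<and> card M' = Suc (card M)" if "ok M" "card M \<le> d" for M
    using augment[OF assms(1,3,4,5,6,7,8,9,10,11,12,13), of M] that
    unfolding ok_def X_def by blast
  have start: "\<exists>M. ok M \<and> card M \<le> d + 1"
  proof (cases "edges_between E T S = {}")
    case True
    thus ?thesis by (intro exI[of _ "{}"]) (auto simp: ok_def)
  next
    case False
    then obtain e where e: "e \<in> edges_between E T S" by blast
    have "ok {e}" using e unfolding ok_def X_def edges_between_def by auto
    thus ?thesis by (intro exI[of _ "{e}"]) auto
  qed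
  have grow: "\<exists>M. ok M \<and> card M \<le> d + 1 \<and> card M \<ge> j" if "j \<le> d + 1" for j
    using that
  proof (induction j)
    case 0 thus ?case using start by auto
  next
    case (Suc j)
    then obtain M where M: "ok M" "card M \<le> d + 1" "card M \<ge> j" by auto
    show ?case
    proof (cases "card M \<ge> Suc j")
      case True thus ?thesis using M by blast
    next
      case False
      hence "card M = j" using M by simp
      hence "card M \<le> d" using Suc.prems by simp
      then obtain M' where "ok M'" "card M' = Suc (card M)" using aug M by blast
      thus ?thesis using \<open>card M = j\<close> Suc.prems by auto
    qed
  qed
  obtain M where M: "ok M" "card M = d + 1" using grow[of "d+1"] by force
  have MX: "M \<subseteq> X" and if1: "inj_on fst M" and is1: "inj_on snd M"
    and inv: "edges_between E T S \<noteq> {} \<longrightarrow> M \<inter> edges_between E T S \<noteq> {}"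
    using M(1) unfolding ok_def by auto
  have fM: "finite M" using finite_subset[OF _ fE] MX XE by blast
  have tl: "fst e \<in> T \<union> B" "snd e \<in> S \<union> B" "fst e \<in> B \<Longrightarrow> snd e \<in> S" if "e \<in> M" for e
    using that MX assms(9) unfolding X_def edges_between_def by auto
  have P1: "\<forall>v. v \<notin> B \<longrightarrow> card {e \<in> M. endvertex v e} \<le> 1"
  proof (intro allI impI)
    fix v assume vB: "v \<notin> B"
    have "\<forall>e1\<in>{e \<in> M. endvertex v e}. \<forall>e2\<in>{e \<in> M. endvertex v e}. e1 = e2"
    proof (intro ballI)
      fix e1 e2 assume e1: "e1 \<in> {e \<in> M. endvertex v e}" and e2: "e2 \<in> {e \<in> M. endvertex v e}"
      hence m: "e1 \<in> M" "e2 \<in> M" and en: "endvertex v e1" "endvertex v e2" by auto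
      show "e1 = e2"
      proof (cases "v \<in> T")
        case True
        hence "v \<notin> S \<union> B" using assms(9,10) by auto
        hence "v = fst e1" "v = fst e2" using en tl(2)[OF m(1)] tl(2)[OF m(2)]
          unfolding endvertex_def by auto
        thus ?thesis using if1 m unfolding inj_on_def by auto
      next
        case False
        hence "v \<notin> T \<union> B" using vB by auto
        hence "v = snd e1" "v = snd e2" using en tl(1)[OF m(1)] tl(1)[OF m(2)]
          unfolding endvertex_def by auto
        thus ?thesis using is1 m unfolding inj_on_def by auto
      qed
    qed
    thus "card {e \<in> M. endvertex v e} \<le> 1" using fM card_le_Suc0_iff_eq[of "{e \<in> M. endvertex v e}"]
      by auto
  qed
  have P2: "\<forall>v \<in> B. card {e \<in> M \<inter> edges_between E T B. endvertex v e} \<le> 1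
                       \<and> card {e \<in> M \<inter> edges_between E B S. endvertex v e} \<le> 1"
  proof (intro ballI conjI)
    fix v assume vB: "v \<in> B"
    have "\<forall>e1\<in>{e \<in> M \<inter> edges_between E T B. endvertex v e}. \<forall>e2\<in>{e \<in> M \<inter> edges_between E T B. endvertex v e}. e1 = e2"
    proof (intro ballI)
      fix e1 e2 assume "e1 \<in> {e \<in> M \<inter> edges_between E T B. endvertex v e}" "e2 \<in> {e \<in> M \<inter> edges_between E T B. endvertex v e}"
      hence "e1 \<in> M" "e2 \<in> M" "v = snd e1" "v = snd e2"
        using vB assms(9) unfolding endvertex_def edges_between_def by auto
      thus "e1 = e2" using is1 unfolding inj_on_def by auto
    qed
    thus "card {e \<in> M \<inter> edges_between E T B. endvertex v e} \<le> 1"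
      using fM card_le_Suc0_iff_eq[of "{e \<in> M \<inter> edges_between E T B. endvertex v e}"] by auto
    have "\<forall>e1\<in>{e \<in> M \<inter> edges_between E B S. endvertex v e}. \<forall>e2\<in>{e \<in> M \<inter> edges_between E B S. endvertex v e}. e1 = e2"
    proof (intro ballI)
      fix e1 e2 assume "e1 \<in> {e \<in> M \<inter> edges_between E B S. endvertex v e}" "e2 \<in> {e \<in> M \<inter> edges_between E B S. endvertex v e}"
      hence "e1 \<in> M" "e2 \<in> M" "v = fst e1" "v = fst e2"
        using vB assms(8) unfolding endvertex_def edges_between_def by auto
      thus "e1 = e2" using if1 unfolding inj_on_def by auto
    qed
    thus "card {e \<in> M \<inter> edges_between E B S. endvertex v e} \<le> 1"
      using fM card_le_Suc0_iff_eq[of "{e \<in> M \<inter> edges_between E B S. endvertex v e}"] by auto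
  qed
  show ?thesis using MX M(2) P1 P2 inv unfolding X_def by blast
qed

end
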